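(* The Banach lattice $\ell_2$ (with coordinatewise order) contains a basis $(u_i)$ which is isometrically equivalent to the canonical basis $(e_i)$ of $\ell_2$ (i.e. $(u_i)$ is an orthonormal basis) and which is neither bibasic nor uniformly quasi-greedy.
   Context: A sequence $(x_k)$ of nonzero vectors in a Banach lattice is bibasic if there is $M\ge1$ with $\|\bigvee_{n=1}^m|\sum_{k=1}^na_kx_k|\|\le M\|\sum_{k=1}^ma_kx_k\|$ for all $m$ and scalars $a_k$. A semi-normalized basic sequence $(x_k)$ with span $E$ and biorthogonal functionals $x_k^*$ is uniformly quasi-greedy if $\sup_m\sup_{x\in E,\|x\|=1}\|\bigvee_{n=1}^m|\mathcal{G}_n(x)|\|<\infty$, where $\mathcal{G}_n(x)=\sum_{j=1}^n x^*_{\rho(j)}(x)x_{\rho(j)}$ and $\rho$ is the natural greedy ordering of $x$ (indices listed by non-increasing $|x_k^*(x)|$, ties broken by increasing index). *)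

theory Defs
  imports "HOL-Analysis.Analysis"
begin

definition l2 :: "(nat \<Rightarrow> real) set" where
  "l2 = {f. summable (\<lambda>i. (f i)\<^sup>2)}"

definition l2norm :: "(nat \<Rightarrow> real) \<Rightarrow> real" where
  "l2norm f = sqrt (\<Sum>i. (f i)\<^sup>2)"

definition l2inner :: "(nat \<Rightarrow> real) \<Rightarrow> (nat \<Rightarrow> real) \<Rightarrow> real" where
  "l2inner f g = (\<Sum>i. f i * g i)"

definition lpsum :: "(nat \<Rightarrow> nat \<Rightarrow> real) \<Rightarrow> (nat \<Rightarrow> real) \<Rightarrow> nat \<Rightarrow> nat \<Rightarrow> real" where
  "lpsum u a n = (\<lambda>i. \<Sum>k<n. a k * u k i)"

definition has_expansion :: "(nat \<Rightarrow> nat \<Rightarrow> real) \<Rightarrow> (nat \<Rightarrow> real) \<Rightarrow> (nat \<Rightarrow> real) \<Rightarrow> bool" where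
  "has_expansion u a x \<longleftrightarrow> LIMSEQ (\<lambda>n. l2norm (\<lambda>i. lpsum u a n i - x i)) 0"

definition is_basis_l2 :: "(nat \<Rightarrow> nat \<Rightarrow> real) \<Rightarrow> bool" where
  "is_basis_l2 u \<longleftrightarrow> (\<forall>k. u k \<in> l2) \<and> (\<forall>x\<in>l2. \<exists>!a. has_expansion u a x)"

definition canon :: "nat \<Rightarrow> nat \<Rightarrow> real" where
  "canon k = (\<lambda>i. if i = k then 1 else 0)"

definition isometrically_equivalent :: "(nat \<Rightarrow> nat \<Rightarrow> real) \<Rightarrow> (nat \<Rightarrow> nat \<Rightarrow> real) \<Rightarrow> bool" where
  "isometrically_equivalent u v \<longleftrightarrow>
     (\<forall>n a. l2norm (lpsum u a n) = l2norm (lpsum v a n))"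

text \<open>Bibasic (indices start at 0; m ranges over positive lengths).\<close>
definition bibasic :: "(nat \<Rightarrow> nat \<Rightarrow> real) \<Rightarrow> bool" where
  "bibasic x \<longleftrightarrow> (\<exists>M\<ge>1. \<forall>m\<ge>1. \<forall>a.
      l2norm (\<lambda>i. Max ((\<lambda>n. \<bar>lpsum x a n i\<bar>) ` {1..m})) \<le> M * l2norm (lpsum x a m))"

text \<open>Closed span E of a basic sequence: vectors admitting an expansion.\<close>
definition span_E :: "(nat \<Rightarrow> nat \<Rightarrow> real) \<Rightarrow> (nat \<Rightarrow> real) set" where
  "span_E u = {x \<in> l2. \<exists>a. has_expansion u a x}"

definition coef :: "(nat \<Rightarrow> nat \<Rightarrow> real) \<Rightarrow> (nat \<Rightarrow> real) \<Rightarrow> nat \<Rightarrow> real" where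
  "coef u x = (THE a. has_expansion u a x)"

text \<open>Position of index k in the natural greedy ordering rho of x (0-based):
  the number of indices preceding k, i.e. with strictly larger coefficient modulus,
  or equal modulus and smaller index.\<close>
definition greedy_rank :: "(nat \<Rightarrow> nat \<Rightarrow> real) \<Rightarrow> (nat \<Rightarrow> real) \<Rightarrow> nat \<Rightarrow> nat" where
  "greedy_rank u x k = card {j. \<bar>coef u x j\<bar> > \<bar>coef u x k\<bar> \<or>
                               (\<bar>coef u x j\<bar> = \<bar>coef u x k\<bar> \<and> j < k)}"

text \<open>Greedy sum G_n(x) = sum_{j<=n} x^*_{rho(j)}(x) x_{rho(j)}; indices with zero
  coefficient contribute nothing and are omitted.\<close>
definition greedy_sum :: "(nat \<Rightarrow> nat \<Rightarrow> real) \<Rightarrow> (nat \<Rightarrow> real) \<Rightarrow> nat \<Rightarrow> nat \<Rightarrow> real" where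
  "greedy_sum u x n = (\<lambda>i. \<Sum>k\<in>{k. coef u x k \<noteq> 0 \<and> greedy_rank u x k < n}. coef u x k * u k i)"

definition uniformly_quasi_greedy :: "(nat \<Rightarrow> nat \<Rightarrow> real) \<Rightarrow> bool" where
  "uniformly_quasi_greedy u \<longleftrightarrow> (\<exists>C. \<forall>m\<ge>1. \<forall>x\<in>span_E u. l2norm x = 1 \<longrightarrow>
      l2norm (\<lambda>i. Max ((\<lambda>n. \<bar>greedy_sum u x n i\<bar>) ` {1..m})) \<le> C)"

end

theory Submission
  imports Defs
begin


lemma tele_cos:
  "2 * sin (a/2) * (\<Sum>j<n. cos (real j * a + \<phi>)) = sin ((real n - 1/2) * a + \<phi>) - sin (\<phi> - a/2)"
proof (induction n)
  case 0
  then show ?case by (simp add: algebra_simps)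
next
  case (Suc n)
  have e: "2 * sin (a/2) * cos (real n * a + \<phi>) = sin ((real n * a + \<phi>) + a/2) - sin ((real n * a + \<phi>) - a/2)"
  proof -
    have "2 * sin (a/2) * cos (real n * a + \<phi>) = sin (a/2 + (real n * a + \<phi>)) + sin (a/2 - (real n * a + \<phi>))"
      using sin_times_cos[of "a/2" "real n * a + \<phi>"] by simp
    moreover have "sin (a/2 - (real n * a + \<phi>)) = - sin ((real n * a + \<phi>) - a/2)"
      by (metis minus_diff_eq sin_minus)
    ultimately show ?thesis by (simp add: algebra_simps)
  qed
  have e1: "(real n * a + \<phi>) + a/2 = (real (Suc n) - 1/2) * a + \<phi>" by (simp add: algebra_simps)
  have e2: "(real n * a + \<phi>) - a/2 = (real n - 1/2) * a + \<phi>" by (simp add: algebra_simps)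
  show ?case using Suc e unfolding e1 e2 by (simp add: algebra_simps)
qed

lemma sin_add_2pi_int: "sin (x + 2 * pi * of_int p) = sin x"
  by (simp add: sin_add)

lemma sin_pi_frac_nz:
  fixes N :: nat and p :: int
  assumes "N > 0" "\<not> int N dvd p"
  shows "sin (pi * of_int p / real N) \<noteq> 0"
proof
  assume "sin (pi * of_int p / real N) = 0"
  then obtain i :: int where "pi * of_int p / real N = of_int i * pi" using sin_zero_iff_int2 by blast
  then have "of_int p = of_int i * (real N)" using assms(1) by (simp add: field_simps)
  then have "p = i * int N" by (metis of_int_eq_iff of_int_mult of_int_of_nat_eq)
  then show False using assms(2) by simp
qed

lemma cos_sum_zero:
  fixes N :: nat and p :: int
  assumes "N > 0" "\<not> int N dvd p"
  shows "(\<Sum>j<N. cos (2 * pi * of_int p * real j / real N + \<phi>)) = 0"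
proof -
  define a where "a = 2 * pi * of_int p / real N"
  have s: "sin (a/2) \<noteq> 0" using sin_pi_frac_nz[OF assms] by (simp add: a_def)
  have eq: "(real N - 1/2) * a + \<phi> = (\<phi> - a/2) + 2 * pi * of_int p" using assms(1) by (simp add: a_def field_simps)
  have "sin ((real N - 1/2) * a + \<phi>) = sin (\<phi> - a/2)" by (simp only: eq sin_add_2pi_int)
  then have "2 * sin (a/2) * (\<Sum>j<N. cos (real j * a + \<phi>)) = 0" using tele_cos by simp
  then have "(\<Sum>j<N. cos (real j * a + \<phi>)) = 0" using s by simp
  moreover have "\<And>j. real j * a = 2 * pi * of_int p * real j / real N" by (simp add: a_def)
  ultimately show ?thesis by simp
qed

lemma sin_sum_zero:
  fixes N :: nat and p :: int
  assumes "N > 0" "\<not> int N dvd p"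
  shows "(\<Sum>j<N. sin (2 * pi * of_int p * real j / real N + \<phi>)) = 0"
proof -
  have "\<And>x. sin x = cos (x + (- pi/2))" by (simp add: cos_diff)
  then have "(\<Sum>j<N. sin (2 * pi * of_int p * real j / real N + \<phi>)) = (\<Sum>j<N. cos (2 * pi * of_int p * real j / real N + (\<phi> - pi/2)))"
    by (simp add: algebra_simps)
  also have "\<dots> = 0" by (rule cos_sum_zero[OF assms])
  finally show ?thesis .
qed




definition hh :: "nat \<Rightarrow> real \<Rightarrow> real" where
  "hh M r = 2 / real (2*M+1) * (\<Sum>m<M. sin (2 * pi * real (Suc m) * r / real (2*M+1)))"

lemma hh_odd: "hh M (- r) = - hh M r"
  unfolding hh_def by (simp add: sum_negf)

lemma hh_swap: "hh M (real j - real k) = - hh M (real k - real j)"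
  using hh_odd[of M "real k - real j"] by simp

lemma hh_zero: "hh M 0 = 0" unfolding hh_def by simp

lemma H1: "(\<Sum>j<2*M+1. hh M (real j + c)) = 0"
proof -
  define N where "N = 2*M+1"
  have N0: "N > 0" by (simp add: N_def)
  have inner: "(\<Sum>j<N. sin (2 * pi * real (Suc m) * (real j + c) / real N)) = 0" if "m < M" for m
  proof -
    have nd: "\<not> int N dvd int (Suc m)"
    proof
      assume "int N dvd int (Suc m)"
      then have "N dvd Suc m" unfolding int_dvd_int_iff .
      then have "N \<le> Suc m" by (rule dvd_imp_le) simp
      then show False using that by (simp add: N_def)
    qed
    have "\<And>j. 2 * pi * real (Suc m) * (real j + c) / real N = 2 * pi * of_int (int (Suc m)) * real j / real N + 2 * pi * real (Suc m) * c / real N"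
      using N0 by (simp add: field_simps)
    then show ?thesis using sin_sum_zero[OF N0 nd] by simp
  qed
  have "(\<Sum>j<N. hh M (real j + c)) = (\<Sum>j<N. 2 / real N * (\<Sum>m<M. sin (2 * pi * real (Suc m) * (real j + c) / real N)))"
    unfolding hh_def N_def by simp
  also have "\<dots> = 2 / real N * (\<Sum>j<N. \<Sum>m<M. sin (2 * pi * real (Suc m) * (real j + c) / real N))"
    by (rule sum_distrib_left[symmetric])
  also have "\<dots> = 2 / real N * (\<Sum>m<M. \<Sum>j<N. sin (2 * pi * real (Suc m) * (real j + c) / real N))"
    by (rule arg_cong[where f="\<lambda>x. 2 / real N * x"], rule sum.swap)
  also have "\<dots> = 0" using inner by simp
  finally show ?thesis by (simp add: N_def)
qed

lemma sinsin_sum: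
  assumes "m < M" "m' < M"
  shows "(\<Sum>j<2*M+1. sin (2 * pi * real (Suc m) * (real j + c) / real (2*M+1)) * sin (2 * pi * real (Suc m') * (real j + c') / real (2*M+1)))
     = (if m = m' then real (2*M+1) / 2 * cos (2 * pi * real (Suc m) * (c - c') / real (2*M+1)) else 0)"
proof -
  define N where "N = 2*M+1"
  have N0: "N > 0" by (simp add: N_def)
  define A where "A j = 2 * pi * real (Suc m) * (real j + c) / real N" for j :: nat
  define B where "B j = 2 * pi * real (Suc m') * (real j + c') / real N" for j :: nat
  have AmB: "A j - B j = 2 * pi * of_int (int (Suc m) - int (Suc m')) * real j / real N + (2 * pi * real (Suc m) * c / real N - 2 * pi * real (Suc m') * c' / real N)" for j
    unfolding A_def B_def by (simp add: algebra_simps add_divide_distrib diff_divide_distrib)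
  have ApB: "A j + B j = 2 * pi * of_int (int (Suc m) + int (Suc m')) * real j / real N + (2 * pi * real (Suc m) * c / real N + 2 * pi * real (Suc m') * c' / real N)" for j
    unfolding A_def B_def by (simp add: algebra_simps add_divide_distrib diff_divide_distrib)
  have nd2: "\<not> int N dvd (int (Suc m) + int (Suc m'))"
  proof
    assume "int N dvd (int (Suc m) + int (Suc m'))"
    then have "N dvd (Suc m + Suc m')" by (metis of_nat_add of_nat_dvd_iff)
    then have "N \<le> Suc m + Suc m'" by (rule dvd_imp_le) simp
    then show False using assms by (simp add: N_def)
  qed
  have s2: "(\<Sum>j<N. cos (A j + B j)) = 0" unfolding ApB by (rule cos_sum_zero[OF N0 nd2])
  have s1: "(\<Sum>j<N. cos (A j - B j)) = (if m = m' then real N * cos (2 * pi * real (Suc m) * (c - c') / real N) else 0)"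
  proof (cases "m = m'")
    case True
    then have "\<And>j. A j - B j = 2 * pi * real (Suc m) * (c - c') / real N" unfolding A_def B_def using N0 by (simp add: field_simps)
    then show ?thesis using True by simp
  next
    case False
    have nd1: "\<not> int N dvd (int (Suc m) - int (Suc m'))"
    proof
      assume d: "int N dvd (int (Suc m) - int (Suc m'))"
      have "\<bar>int (Suc m) - int (Suc m')\<bar> < int N" using assms by (simp add: N_def)
      moreover have "int (Suc m) - int (Suc m') \<noteq> 0" using False by simp
      ultimately have "\<bar>int N\<bar> \<le> \<bar>int (Suc m) - int (Suc m')\<bar>" using d dvd_imp_le_int by blast
      then show False using \<open>\<bar>int (Suc m) - int (Suc m')\<bar> < int N\<close> by simp
    qed
    show ?thesis unfolding AmB using cos_sum_zero[OF N0 nd1] False by simp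
  qed
  have "(\<Sum>j<N. sin (A j) * sin (B j)) = ((\<Sum>j<N. cos (A j - B j)) - (\<Sum>j<N. cos (A j + B j))) / 2"
    unfolding sin_times_sin sum_divide_distrib[symmetric] sum_subtractf ..
  also have "\<dots> = (if m = m' then real N / 2 * cos (2 * pi * real (Suc m) * (c - c') / real N) else 0)"
    using s1 s2 by simp
  finally show ?thesis unfolding A_def B_def N_def .
qed

lemma H2: "(\<Sum>j<2*M+1. hh M (real j + c) * hh M (real j + c')) =
   2 / real (2*M+1) * (\<Sum>m<M. cos (2 * pi * real (Suc m) * (c - c') / real (2*M+1)))"
proof -
  define N where "N = 2*M+1"
  define S where "S m x = sin (2 * pi * real (Suc m) * x / real N)" for m x
  have hhS: "hh M x = 2 / real N * (\<Sum>m<M. S m x)" for x unfolding hh_def S_def N_def by simp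
  have pr: "hh M a * hh M b = (2 / real N)^2 * (\<Sum>m<M. \<Sum>m'<M. S m a * S m' b)" for a b
    unfolding hhS by (simp add: sum_product power2_eq_square)
  have "(\<Sum>j<N. hh M (real j + c) * hh M (real j + c')) =
     (2 / real N)^2 * (\<Sum>j<N. \<Sum>m<M. \<Sum>m'<M. S m (real j + c) * S m' (real j + c'))"
    unfolding pr by (simp add: sum_distrib_left)
  also have "\<dots> = (2 / real N)^2 * (\<Sum>m<M. \<Sum>m'<M. \<Sum>j<N. S m (real j + c) * S m' (real j + c'))"
    by (simp add: sum.swap[of _ "{..<N}"])
  also have "\<dots> = (2 / real N)^2 * (\<Sum>m<M. \<Sum>m'<M. (if m = m' then real N / 2 * cos (2 * pi * real (Suc m) * (c - c') / real N) else 0))"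
    using sinsin_sum unfolding S_def N_def by (intro arg_cong2[where f="(*)"] sum.cong) auto
  also have "\<dots> = (2 / real N)^2 * (\<Sum>m<M. real N / 2 * cos (2 * pi * real (Suc m) * (c - c') / real N))"
    by (simp add: sum.delta)
  also have "\<dots> = (2 / real N)^2 * (real N / 2 * (\<Sum>m<M. cos (2 * pi * real (Suc m) * (c - c') / real N)))"
    by (simp only: sum_distrib_left)
  also have "\<dots> = 2 / real N * (\<Sum>m<M. cos (2 * pi * real (Suc m) * (c - c') / real N))"
  proof -
    have "real N > 0" by (simp add: N_def)
    then have "\<And>X. (2 / real N)^2 * (real N / 2 * X) = 2 / real N * X" by (simp add: power2_eq_square field_simps)
    then show ?thesis by blast
  qed
  finally show ?thesis unfolding N_def .
qed

lemma H3:
  fixes d :: int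
  assumes "\<bar>d\<bar> < int (2*M+1)"
  shows "2 / real (2*M+1) * (\<Sum>m<M. cos (2 * pi * real (Suc m) * of_int d / real (2*M+1))) = (if d = 0 then 1 else 0) - 1 / real (2*M+1)"
proof (cases "d = 0")
  case True
  then show ?thesis by (simp add: field_simps)
next
  case False
  define N where "N = 2*M+1"
  have N0: "N > 0" by (simp add: N_def)
  have nd: "\<not> int N dvd d"
  proof
    assume "int N dvd d"
    then have "\<bar>int N\<bar> \<le> \<bar>d\<bar>" using False by (rule dvd_imp_le_int[rotated])
    then show False using assms by (simp add: N_def)
  qed
  define \<theta> where "\<theta> = 2 * pi * of_int d / real N"
  have s: "sin (\<theta>/2) \<noteq> 0" using sin_pi_frac_nz[OF N0 nd] by (simp add: \<theta>_def)
  have t: "2 * sin (\<theta>/2) * (\<Sum>m<M. cos (real m * \<theta> + \<theta>)) = sin ((real M - 1/2) * \<theta> + \<theta>) - sin (\<theta> - \<theta>/2)"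
    by (rule tele_cos)
  have Nr: "real N = 2 * real M + 1" by (simp add: N_def)
  have nz: "2 * real M + 1 \<noteq> 0" by (simp add: add_pos_nonneg)
  have "(real M - 1/2) * \<theta> + \<theta> = (2 * real M + 1) / 2 * \<theta>" by (simp add: algebra_simps)
  also have "\<dots> = of_int d * pi" unfolding \<theta>_def Nr using nz by (simp add: field_simps)
  finally have "(real M - 1/2) * \<theta> + \<theta> = of_int d * pi" .
  then have z: "sin ((real M - 1/2) * \<theta> + \<theta>) = 0" by (simp add: sin_zero_iff_int2)
  have e: "\<theta> - \<theta>/2 = \<theta>/2" by simp
  have "2 * sin (\<theta>/2) * (\<Sum>m<M. cos (real m * \<theta> + \<theta>)) = - sin (\<theta>/2)" using t unfolding z e by simp
  then have "sin (\<theta>/2) * (2 * (\<Sum>m<M. cos (real m * \<theta> + \<theta>)) + 1) = 0" by (simp add: algebra_simps)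
  then have "(\<Sum>m<M. cos (real m * \<theta> + \<theta>)) = - 1/2" using s by simp
  moreover have "\<And>m. cos (2 * pi * real (Suc m) * of_int d / real N) = cos (real m * \<theta> + \<theta>)"
    using N0 by (simp add: \<theta>_def field_simps)
  ultimately show ?thesis using False by (simp add: N_def field_simps)
qed

lemma hh_pair: "j < 2*M+1 \<Longrightarrow> k < 2*M+1 \<Longrightarrow> l < 2*M+1 \<Longrightarrow>
  (\<Sum>i<2*M+1. hh M (real i - real k) * hh M (real i - real l)) = (if k = l then 1 else 0) - 1 / real (2*M+1)"
proof -
  assume a: "k < 2*M+1" "l < 2*M+1"
  have "(\<Sum>i<2*M+1. hh M (real i - real k) * hh M (real i - real l)) = (\<Sum>i<2*M+1. hh M (real i + (- real k)) * hh M (real i + (- real l)))"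
    by simp
  also have "\<dots> = 2 / real (2*M+1) * (\<Sum>m<M. cos (2 * pi * real (Suc m) * of_int (int l - int k) / real (2*M+1)))"
    by (subst H2) simp
  also have "\<dots> = (if int l - int k = 0 then 1 else 0) - 1 / real (2*M+1)"
    by (rule H3) (use a in simp)
  finally show ?thesis by auto
qed

definition GGs :: "real \<Rightarrow> nat \<Rightarrow> nat \<Rightarrow> nat \<Rightarrow> real" where
  "GGs \<sigma> M j k = (if j < 2*M+1 \<and> k < 2*M+1 then \<sigma> * hh M (real j - real k)
     else if j < 2*M+1 \<or> k < 2*M+1 then 1 / sqrt (real (2*M+1)) else 0)"

definition GG :: "nat \<Rightarrow> nat \<Rightarrow> nat \<Rightarrow> real" where
  "GG M j k = GGs 1 M j k"

lemma GGs_col: assumes sg: "\<sigma> * \<sigma> = 1"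
  shows "k < 2*M+2 \<Longrightarrow> l < 2*M+2 \<Longrightarrow> (\<Sum>j<2*M+2. GGs \<sigma> M j k * GGs \<sigma> M j l) = (if k = l then 1 else 0)"
proof -
  assume a: "k < 2*M+2" "l < 2*M+2"
  define N where "N = 2*M+1"
  have NN: "2*M+2 = Suc N" by (simp add: N_def)
  have G: "GGs \<sigma> M j k = (if j < N \<and> k < N then \<sigma> * hh M (real j - real k) else if j < N \<or> k < N then 1 / sqrt (real N) else 0)" for j k
    unfolding N_def GGs_def ..
  have sq: "sqrt (real N) * sqrt (real N) = real N" by simp
  have Npos: "real N > 0" by (simp add: N_def)
  have sp: "(\<Sum>j<2*M+2. GGs \<sigma> M j k * GGs \<sigma> M j l) = (\<Sum>j<N. GGs \<sigma> M j k * GGs \<sigma> M j l) + GGs \<sigma> M N k * GGs \<sigma> M N l"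
    unfolding NN by simp
  have h1: "(\<Sum>j<N. hh M (real j - real k)) = 0" for k
    using H1[of M "- real k"] unfolding N_def by simp
  show ?thesis
  proof (cases "k < N")
    case kN: True
    show ?thesis
    proof (cases "l < N")
      case True
      have "(\<Sum>j<N. GGs \<sigma> M j k * GGs \<sigma> M j l) = (\<Sum>j<N. (\<sigma> * \<sigma>) * (hh M (real j - real k) * hh M (real j - real l)))"
        using kN True by (simp add: G algebra_simps)
      also have "\<dots> = (\<Sum>j<N. hh M (real j - real k) * hh M (real j - real l))" using sg by simp
      also have "\<dots> = (if k = l then 1 else 0) - 1 / real N" using hh_pair[of 0 M k l] kN True by (simp add: N_def)
      finally show ?thesis using kN True unfolding sp by (simp add: G sq)
    next
      case False
      then have lN: "l = N" using a NN by simp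
      have "(\<Sum>j<N. GGs \<sigma> M j k * GGs \<sigma> M j l) = \<sigma> * (\<Sum>j<N. hh M (real j - real k)) / sqrt (real N)"
        using kN lN by (simp add: G sum_divide_distrib sum_distrib_left)
      also have "\<dots> = 0" using h1 by simp
      finally show ?thesis using kN lN unfolding sp by (simp add: G)
    qed
  next
    case kF: False
    then have kN: "k = N" using a NN by simp
    show ?thesis
    proof (cases "l < N")
      case True
      have "(\<Sum>j<N. GGs \<sigma> M j k * GGs \<sigma> M j l) = \<sigma> * (\<Sum>j<N. hh M (real j - real l)) / sqrt (real N)"
        using kN True by (simp add: G sum_divide_distrib sum_distrib_left)
      also have "\<dots> = 0" using h1 by simp
      finally show ?thesis using kN True unfolding sp by (simp add: G)
    next
      case False
      then have lN: "l = N" using a NN by simp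
      have "(\<Sum>j<N. GGs \<sigma> M j k * GGs \<sigma> M j l) = (\<Sum>j<N. 1 / real N)"
        using kN lN by (simp add: G sq)
      also have "\<dots> = 1" using Npos by simp
      finally show ?thesis using kN lN unfolding sp by (simp add: G)
    qed
  qed
qed

lemma GG_col: "k < 2*M+2 \<Longrightarrow> l < 2*M+2 \<Longrightarrow> (\<Sum>j<2*M+2. GG M j k * GG M j l) = (if k = l then 1 else 0)"
  unfolding GG_def by (rule GGs_col) simp_all

lemma GG_row: "j < 2*M+2 \<Longrightarrow> j' < 2*M+2 \<Longrightarrow> (\<Sum>k<2*M+2. GG M j k * GG M j' k) = (if j = j' then 1 else 0)"
proof -
  have t: "GG M j k = GGs (-1) M k j" for j k
    unfolding GG_def GGs_def by (simp add: hh_swap[of M j k])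
  assume "j < 2*M+2" "j' < 2*M+2"
  then show ?thesis unfolding t by (rule GGs_col[rotated]) simp
qed




lemma Fsum: "2 * sin (\<theta>/2) * (\<Sum>r<Suc j. sin (real r * \<theta>)) = cos (\<theta>/2) - cos ((real j + 1/2) * \<theta>)"
proof (induction j)
  case 0
  then show ?case by simp
next
  case (Suc j)
  have e1: "\<theta>/2 - real (Suc j) * \<theta> = - ((real j + 1/2) * \<theta>)" by (simp add: algebra_simps)
  have e2: "\<theta>/2 + real (Suc j) * \<theta> = (real (Suc j) + 1/2) * \<theta>" by (simp add: algebra_simps)
  have "2 * sin (\<theta>/2) * sin (real (Suc j) * \<theta>) = cos (\<theta>/2 - real (Suc j) * \<theta>) - cos (\<theta>/2 + real (Suc j) * \<theta>)"
    using sin_times_sin[of "\<theta>/2" "real (Suc j) * \<theta>"] by simp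
  also have "\<dots> = cos ((real j + 1/2) * \<theta>) - cos ((real (Suc j) + 1/2) * \<theta>)"
    unfolding e1 e2 cos_minus ..
  finally have st: "2 * sin (\<theta>/2) * sin (real (Suc j) * \<theta>) = cos ((real j + 1/2) * \<theta>) - cos ((real (Suc j) + 1/2) * \<theta>)" .
  have "2 * sin (\<theta>/2) * (\<Sum>r<Suc (Suc j). sin (real r * \<theta>)) = 2 * sin (\<theta>/2) * (\<Sum>r<Suc j. sin (real r * \<theta>)) + 2 * sin (\<theta>/2) * sin (real (Suc j) * \<theta>)"
    by (simp add: algebra_simps)
  then show ?case using Suc st by simp
qed

lemma FFsum:
  assumes "m < M"
  shows "(\<Sum>j<2*M+1. \<Sum>r<Suc j. sin (real r * (2 * pi * real (Suc m) / real (2*M+1))))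
     = real (2*M+1) * cos (pi * real (Suc m) / real (2*M+1)) / (2 * sin (pi * real (Suc m) / real (2*M+1)))"
proof -
  define N where "N = 2*M+1"
  have N0: "N > 0" by (simp add: N_def)
  define \<theta> where "\<theta> = 2 * pi * real (Suc m) / real N"
  have nd: "\<not> int N dvd int (Suc m)"
  proof
    assume "int N dvd int (Suc m)"
    then have "N dvd Suc m" unfolding int_dvd_int_iff .
    then have "N \<le> Suc m" by (rule dvd_imp_le) simp
    then show False using assms by (simp add: N_def)
  qed
  have s: "sin (\<theta>/2) \<noteq> 0" using sin_pi_frac_nz[OF N0 nd] by (simp add: \<theta>_def)
  have c0: "(\<Sum>j<N. cos (2 * pi * of_int (int (Suc m)) * real j / real N + \<theta>/2)) = 0"
    by (rule cos_sum_zero[OF N0 nd])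
  have "\<And>j. (real j + 1/2) * \<theta> = 2 * pi * of_int (int (Suc m)) * real j / real N + \<theta>/2"
    unfolding \<theta>_def using N0 by (simp add: field_simps)
  then have c1: "(\<Sum>j<N. cos ((real j + 1/2) * \<theta>)) = 0" using c0 by simp
  have "2 * sin (\<theta>/2) * (\<Sum>j<N. \<Sum>r<Suc j. sin (real r * \<theta>)) = (\<Sum>j<N. 2 * sin (\<theta>/2) * (\<Sum>r<Suc j. sin (real r * \<theta>)))"
    by (simp add: sum_distrib_left)
  also have "\<dots> = (\<Sum>j<N. cos (\<theta>/2) - cos ((real j + 1/2) * \<theta>))" using Fsum by simp
  also have "\<dots> = real N * cos (\<theta>/2)" using c1 by (simp add: sum_subtractf)
  finally have "(\<Sum>j<N. \<Sum>r<Suc j. sin (real r * \<theta>)) = real N * cos (\<theta>/2) / (2 * sin (\<theta>/2))"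
    using s by (simp add: field_simps)
  moreover have "\<theta>/2 = pi * real (Suc m) / real N" by (simp add: \<theta>_def)
  ultimately show ?thesis unfolding \<theta>_def N_def by simp
qed

definition PP :: "nat \<Rightarrow> nat \<Rightarrow> real" where
  "PP M j = (\<Sum>k<Suc j. hh M (real j - real k))"

lemma PP_alt: "PP M j = (\<Sum>r<Suc j. hh M (real r))"
proof -
  have "PP M j = (\<Sum>k<Suc j. hh M (real (j - k)))" unfolding PP_def
    by (intro sum.cong) (auto simp: of_nat_diff)
  also have "\<dots> = (\<Sum>r<Suc j. hh M (real r))"
    using sum.nat_diff_reindex[of "\<lambda>r. hh M (real r)" "Suc j"] by simp
  finally show ?thesis .
qed

lemma PP_total: "(\<Sum>j<2*M+1. PP M j) = (\<Sum>m<M. cos (pi * real (Suc m) / real (2*M+1)) / sin (pi * real (Suc m) / real (2*M+1)))"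
proof -
  define N where "N = 2*M+1"
  have Npos: "real N > 0" by (simp add: N_def)
  have "(\<Sum>j<N. PP M j) = (\<Sum>j<N. \<Sum>r<Suc j. 2 / real N * (\<Sum>m<M. sin (real r * (2 * pi * real (Suc m) / real N))))"
    unfolding PP_alt hh_def N_def by (intro sum.cong refl) (simp add: algebra_simps)
  also have "\<dots> = 2 / real N * (\<Sum>j<N. \<Sum>r<Suc j. \<Sum>m<M. sin (real r * (2 * pi * real (Suc m) / real N)))"
    by (simp only: sum_distrib_left)
  also have "\<dots> = 2 / real N * (\<Sum>j<N. \<Sum>m<M. \<Sum>r<Suc j. sin (real r * (2 * pi * real (Suc m) / real N)))"
    by (intro arg_cong[where f="\<lambda>x. 2 / real N * x"] sum.cong refl sum.swap)
  also have "\<dots> = 2 / real N * (\<Sum>m<M. \<Sum>j<N. \<Sum>r<Suc j. sin (real r * (2 * pi * real (Suc m) / real N)))"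
    by (intro arg_cong[where f="\<lambda>x. 2 / real N * x"] sum.swap)
  also have "\<dots> = 2 / real N * (\<Sum>m<M. real N * cos (pi * real (Suc m) / real N) / (2 * sin (pi * real (Suc m) / real N)))"
    using FFsum unfolding N_def by (intro arg_cong2[where f="(*)"] sum.cong) auto
  also have "\<dots> = (\<Sum>m<M. cos (pi * real (Suc m) / real N) / sin (pi * real (Suc m) / real N))"
    using Npos by (simp add: sum_distrib_left)
  finally show ?thesis unfolding N_def .
qed

lemma cot_lower:
  fixes x :: real
  assumes "0 < x" "x \<le> pi/2"
  shows "1/x - x/2 \<le> cos x / sin x"
proof -
  have sp: "sin x > 0" using assms by (intro sin_gt_zero) auto
  have sx: "sin x \<le> x" using assms by (intro sin_x_le_x) auto
  have c0: "cos x \<ge> 0" using assms by (intro cos_ge_zero) auto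
  have s2: "sin (x/2) \<le> x/2" using assms by (intro sin_x_le_x) auto
  have s20: "sin (x/2) \<ge> 0" using assms by (intro sin_ge_zero) auto
  have "cos x = 1 - 2 * sin (x/2) ^ 2" using cos_double_sin[of "x/2"] by simp
  moreover have "sin (x/2) ^ 2 \<le> (x/2)^2" using s2 s20 by (intro power_mono) auto
  ultimately have cl: "cos x \<ge> 1 - x^2/2" by (simp add: power2_eq_square)
  have "1/x - x/2 = (1 - x^2/2) / x" using assms by (simp add: field_simps power2_eq_square)
  also have "\<dots> \<le> cos x / x" using cl assms by (intro divide_right_mono) auto
  also have "\<dots> \<le> cos x / sin x" using sp sx c0 by (intro divide_left_mono) auto
  finally show ?thesis .
qed

lemma PP_total_lower: "real (2*M+1) * (harm M / pi - 1/2) \<le> (\<Sum>j<2*M+1. PP M j)"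
proof -
  define N where "N = 2*M+1"
  have Npos: "real N > 0" by (simp add: N_def)
  have tm: "real N / (pi * real (Suc m)) - 1 \<le> cos (pi * real (Suc m) / real N) / sin (pi * real (Suc m) / real N)"
    if "m < M" for m
  proof -
    define x where "x = pi * real (Suc m) / real N"
    have x0: "0 < x" using Npos by (simp add: x_def)
    have "real (Suc m) * 2 \<le> real N" using that by (simp add: N_def)
    then have "pi * (real (Suc m) * 2) \<le> pi * real N" by (intro mult_left_mono) auto
    then have xl: "x \<le> pi/2" unfolding x_def using Npos by (simp add: field_simps)
    have "x/2 \<le> 1" using xl pi_less_4 by simp
    moreover have "1/x = real N / (pi * real (Suc m))" by (simp add: x_def)
    ultimately show ?thesis using cot_lower[OF x0 xl] unfolding x_def[symmetric] by linarith
  qed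
  have "real N * (harm M / pi - 1/2) \<le> (\<Sum>m<M. real N / (pi * real (Suc m)) - 1)"
  proof -
    have "(\<Sum>m<M. real N / (pi * real (Suc m)) - 1) = real N / pi * harm M - real M"
      by (simp add: harm_altdef sum_subtractf sum_distrib_left field_simps)
    moreover have "real M \<le> real N / 2" by (simp add: N_def)
    ultimately show ?thesis by (simp add: algebra_simps)
  qed
  also have "\<dots> \<le> (\<Sum>m<M. cos (pi * real (Suc m) / real N) / sin (pi * real (Suc m) / real N))"
    using tm by (intro sum_mono) auto
  also have "\<dots> = (\<Sum>j<N. PP M j)" using PP_total unfolding N_def by simp
  finally show ?thesis unfolding N_def .
qed

lemma PP_sq_lower:
  assumes "harm M / pi - 1/2 \<ge> 0"
  shows "(harm M / pi - 1/2)^2 \<le> (\<Sum>j<2*M+1. (PP M j / sqrt (real (2*M+1)))^2)"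
proof -
  define N where "N = 2*M+1"
  have Npos: "real N > 0" by (simp add: N_def)
  have "(real N * (harm M / pi - 1/2))^2 \<le> (\<Sum>j<N. PP M j)^2"
    using PP_total_lower[of M] assms Npos unfolding N_def by (intro power_mono) auto
  also have "\<dots> \<le> (\<Sum>j<N. (PP M j)^2) * real N"
    using sum_squared_le_sum_of_squares[of "PP M" "{..<N}"] by simp
  finally have "real N * (real N * (harm M / pi - 1/2)^2) \<le> real N * (\<Sum>j<N. (PP M j)^2)"
    by (simp add: power_mult_distrib power2_eq_square algebra_simps)
  then have "real N * (harm M / pi - 1/2)^2 \<le> (\<Sum>j<N. (PP M j)^2)"
    using Npos by (rule mult_left_le_imp_le)
  then have "(harm M / pi - 1/2)^2 \<le> (\<Sum>j<N. (PP M j)^2) / real N"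
    using Npos by (simp add: pos_le_divide_eq mult.commute)
  also have "\<dots> = (\<Sum>j<N. (PP M j / sqrt (real N))^2)"
    using Npos by (simp add: power_divide sum_divide_distrib)
  finally show ?thesis unfolding N_def .
qed




definition sb :: "nat \<Rightarrow> nat" where "sb b = b*b + 3*b"
definition blk :: "nat \<Rightarrow> nat" where "blk k = (LEAST b. k < sb (Suc b))"
definition Bset :: "nat \<Rightarrow> nat set" where "Bset b = {sb b..<sb (Suc b)}"

lemma sb_Suc: "sb (Suc b) = sb b + (2 * Suc b + 2)" by (simp add: sb_def algebra_simps)
lemma sb_0[simp]: "sb 0 = 0" by (simp add: sb_def)
lemma sb_ge: "b \<le> sb b" by (simp add: sb_def)
lemma sb_less: "b < c \<Longrightarrow> sb b < sb c" unfolding sb_def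
  by (intro add_less_le_mono mult_strict_mono) auto
lemma sb_le: "b \<le> c \<Longrightarrow> sb b \<le> sb c" unfolding sb_def
  by (intro add_mono mult_mono) auto

lemma blk_ub: "k < sb (Suc (blk k))"
proof -
  have "k < sb (Suc k)" using sb_ge[of "Suc k"] by simp
  then show ?thesis unfolding blk_def by (rule LeastI)
qed

lemma blk_lb: "sb (blk k) \<le> k"
proof (cases "blk k")
  case 0 then show ?thesis by simp
next
  case (Suc c)
  then have "c < blk k" by simp
  then have "\<not> k < sb (Suc c)" unfolding blk_def by (rule not_less_Least)
  then show ?thesis using Suc by simp
qed

lemma blk_eq: "sb b \<le> k \<Longrightarrow> k < sb (Suc b) \<Longrightarrow> blk k = b"
proof -
  assume a: "sb b \<le> k" "k < sb (Suc b)"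
  show "blk k = b"
  proof (rule ccontr)
    assume "blk k \<noteq> b"
    then consider "blk k < b" | "b < blk k" by linarith
    then show False
    proof cases
      case 1
      then have "sb (Suc (blk k)) \<le> sb b" by (intro sb_le) simp
      then show False using blk_ub[of k] a by simp
    next
      case 2
      then have "sb (Suc b) \<le> sb (blk k)" by (intro sb_le) simp
      then show False using blk_lb[of k] a by simp
    qed
  qed
qed

lemma blk_iff: "blk k = b \<longleftrightarrow> k \<in> Bset b"
  using blk_eq blk_lb blk_ub unfolding Bset_def by auto

lemma in_Bset_blk: "k \<in> Bset (blk k)" using blk_iff by blast

lemma blk_mono: "k \<le> k' \<Longrightarrow> blk k \<le> blk k'"
proof (rule ccontr)
  assume "k \<le> k'" "\<not> blk k \<le> blk k'"
  then have "sb (Suc (blk k')) \<le> sb (blk k)" by (intro sb_le) simp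
  then show False using blk_ub[of k'] blk_lb[of k] \<open>k \<le> k'\<close> by simp
qed

lemma finite_Bset[simp]: "finite (Bset b)" by (simp add: Bset_def)

lemma sum_Bset: "(\<Sum>i\<in>Bset b. f i) = (\<Sum>r<2 * Suc b + 2. f (sb b + r))"
proof -
  have "Bset b = {0 + sb b..<(2 * Suc b + 2) + sb b}" by (simp add: Bset_def sb_Suc add.commute)
  then have "(\<Sum>i\<in>Bset b. f i) = (\<Sum>r\<in>{0..<2 * Suc b + 2}. f (r + sb b))"
    by (simp only: sum.shift_bounds_nat_ivl)
  then show ?thesis by (simp add: atLeast0LessThan add.commute)
qed

definition uu :: "nat \<Rightarrow> nat \<Rightarrow> real" where
  "uu k i = (if blk i = blk k then GG (Suc (blk k)) (i - sb (blk k)) (k - sb (blk k)) else 0)"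

lemma uu_nz: "uu k i \<noteq> 0 \<Longrightarrow> blk i = blk k" unfolding uu_def by (auto split: if_splits)

lemma uu_col: "blk k = b \<Longrightarrow> blk l = b \<Longrightarrow> (\<Sum>i\<in>Bset b. uu k i * uu l i) = (if k = l then 1 else 0)"
proof -
  assume a: "blk k = b" "blk l = b"
  have k: "k - sb b < 2 * Suc b + 2" "l - sb b < 2 * Suc b + 2"
    using a blk_ub[of k] blk_ub[of l] by (simp_all add: sb_Suc)
  have "(\<Sum>i\<in>Bset b. uu k i * uu l i) = (\<Sum>r<2 * Suc b + 2. uu k (sb b + r) * uu l (sb b + r))"
    by (rule sum_Bset)
  also have "\<dots> = (\<Sum>r<2 * Suc b + 2. GG (Suc b) r (k - sb b) * GG (Suc b) r (l - sb b))"
  proof (intro sum.cong refl)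
    fix r assume "r \<in> {..<2 * Suc b + 2}"
    then have "blk (sb b + r) = b" by (intro blk_eq) (auto simp: sb_Suc)
    then show "uu k (sb b + r) * uu l (sb b + r) = GG (Suc b) r (k - sb b) * GG (Suc b) r (l - sb b)"
      using a by (simp add: uu_def)
  qed
  also have "\<dots> = (if k - sb b = l - sb b then 1 else 0)"
    using GG_col[of "k - sb b" "Suc b" "l - sb b"] k by simp
  also have "\<dots> = (if k = l then 1 else 0)"
    using a blk_lb[of k] blk_lb[of l] by auto
  finally show ?thesis .
qed

lemma uu_row: "blk i = b \<Longrightarrow> blk i' = b \<Longrightarrow> (\<Sum>k\<in>Bset b. uu k i * uu k i') = (if i = i' then 1 else 0)"
proof -
  assume a: "blk i = b" "blk i' = b"
  have k: "i - sb b < 2 * Suc b + 2" "i' - sb b < 2 * Suc b + 2"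
    using a blk_ub[of i] blk_ub[of i'] by (simp_all add: sb_Suc)
  have "(\<Sum>k\<in>Bset b. uu k i * uu k i') = (\<Sum>r<2 * Suc b + 2. uu (sb b + r) i * uu (sb b + r) i')"
    by (rule sum_Bset)
  also have "\<dots> = (\<Sum>r<2 * Suc b + 2. GG (Suc b) (i - sb b) r * GG (Suc b) (i' - sb b) r)"
  proof (intro sum.cong refl)
    fix r assume "r \<in> {..<2 * Suc b + 2}"
    then have "blk (sb b + r) = b" by (intro blk_eq) (auto simp: sb_Suc)
    then show "uu (sb b + r) i * uu (sb b + r) i' = GG (Suc b) (i - sb b) r * GG (Suc b) (i' - sb b) r"
      using a by (simp add: uu_def)
  qed
  also have "\<dots> = (if i - sb b = i' - sb b then 1 else 0)"
    using GG_row[of "i - sb b" "Suc b" "i' - sb b"] k by simp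
  also have "\<dots> = (if i = i' then 1 else 0)"
    using a blk_lb[of i] blk_lb[of i'] by auto
  finally show ?thesis .
qed

lemma uu_supp: "uu k i \<noteq> 0 \<Longrightarrow> i < sb (Suc (blk k))"
  using uu_nz blk_ub by metis

lemma l2inner_fin:
  assumes "\<And>i. i \<notin> A \<Longrightarrow> f i * g i = 0" "finite A"
  shows "l2inner f g = (\<Sum>i\<in>A. f i * g i)"
  unfolding l2inner_def by (rule suminf_finite) (use assms in auto)

lemma uu_orth: "l2inner (uu j) (uu k) = (if j = k then 1 else 0)"
proof -
  have "l2inner (uu j) (uu k) = (\<Sum>i\<in>Bset (blk k). uu j i * uu k i)"
    by (rule l2inner_fin) (auto simp: blk_iff[symmetric] dest: uu_nz)
  also have "\<dots> = (if j = k then 1 else 0)"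
  proof (cases "blk j = blk k")
    case True
    then show ?thesis using uu_col[of j "blk k" k] by simp
  next
    case False
    then have "\<And>i. i \<in> Bset (blk k) \<Longrightarrow> uu j i * uu k i = 0"
      by (metis blk_iff mult_eq_0_iff uu_nz)
    then have "(\<Sum>i\<in>Bset (blk k). uu j i * uu k i) = 0" by (intro sum.neutral) blast
    then show ?thesis using False by auto
  qed
  finally show ?thesis .
qed

lemma iso_gen:
  fixes v :: "nat \<Rightarrow> nat \<Rightarrow> real"
  assumes supp: "\<And>k i. v k i \<noteq> 0 \<Longrightarrow> i < F k"
    and on: "\<And>k l. l2inner (v k) (v l) = (if k = l then 1 else 0)"
  shows "(\<Sum>i. (lpsum v a n i)^2) = (\<Sum>k<n. (a k)^2)" "l2norm (lpsum v a n) = sqrt (\<Sum>k<n. (a k)^2)"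
proof -
  define B where "B = (\<Sum>k<n. F k)"
  have FB: "k < n \<Longrightarrow> F k \<le> B" for k unfolding B_def
    by (rule member_le_sum) auto
  have vz: "k < n \<Longrightarrow> i \<ge> B \<Longrightarrow> v k i = 0" for k i using supp FB by force
  have ip: "(\<Sum>i<B. v k i * v l i) = (if k = l then 1 else 0)" if "k < n" "l < n" for k l
  proof -
    have "l2inner (v k) (v l) = (\<Sum>i<B. v k i * v l i)"
      by (rule l2inner_fin) (use vz that in auto)
    then show ?thesis using on by simp
  qed
  have "(\<Sum>i. (lpsum v a n i)^2) = (\<Sum>i<B. (lpsum v a n i)^2)"
    by (rule suminf_finite) (auto simp: lpsum_def vz)
  also have "\<dots> = (\<Sum>i<B. \<Sum>k<n. \<Sum>l<n. a k * a l * (v k i * v l i))"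
  proof (rule sum.cong[OF refl])
    fix i
    show "(lpsum v a n i)^2 = (\<Sum>k<n. \<Sum>l<n. a k * a l * (v k i * v l i))"
      unfolding lpsum_def power2_eq_square sum_product by (simp only: mult_ac)
  qed
  also have "\<dots> = (\<Sum>k<n. \<Sum>i<B. \<Sum>l<n. a k * a l * (v k i * v l i))"
    by (rule sum.swap)
  also have "\<dots> = (\<Sum>k<n. \<Sum>l<n. \<Sum>i<B. a k * a l * (v k i * v l i))"
    by (rule sum.cong[OF refl], rule sum.swap)
  also have "\<dots> = (\<Sum>k<n. \<Sum>l<n. a k * a l * (\<Sum>i<B. v k i * v l i))"
    by (simp only: sum_distrib_left)
  also have "\<dots> = (\<Sum>k<n. \<Sum>l<n. a k * a l * (if k = l then 1 else 0))"
    by (intro sum.cong refl) (simp add: ip)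
  also have "\<dots> = (\<Sum>k<n. (a k)^2)"
    by (simp add: power2_eq_square if_distrib sum.delta cong: if_cong)
  finally show s: "(\<Sum>i. (lpsum v a n i)^2) = (\<Sum>k<n. (a k)^2)" .
  show "l2norm (lpsum v a n) = sqrt (\<Sum>k<n. (a k)^2)"
    unfolding l2norm_def s ..
qed

lemma canon_orth: "l2inner (canon j) (canon k) = (if j = k then 1 else 0)"
proof -
  have "l2inner (canon j) (canon k) = (\<Sum>i\<in>{k}. canon j i * canon k i)"
    by (rule l2inner_fin) (auto simp: canon_def)
  then show ?thesis by (simp add: canon_def)
qed

lemma iso_uu: "l2norm (lpsum uu a n) = sqrt (\<Sum>k<n. (a k)^2)"
  by (rule iso_gen(2)[OF uu_supp uu_orth])

lemma iso_canon: "l2norm (lpsum canon a n) = sqrt (\<Sum>k<n. (a k)^2)"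
  by (rule iso_gen(2)[of canon Suc]) (auto simp: canon_orth, simp add: canon_def split: if_splits)

lemma isoeq: "isometrically_equivalent uu canon"
  unfolding isometrically_equivalent_def iso_uu iso_canon by simp




definition cf :: "(nat \<Rightarrow> real) \<Rightarrow> nat \<Rightarrow> real" where
  "cf x k = (\<Sum>i\<in>Bset (blk k). x i * uu k i)"

lemma blk_less: "k < sb b \<Longrightarrow> blk k < b"
  using blk_lb[of k] sb_le[of b "blk k"] by (meson le_less_trans linorder_not_le order.strict_iff_not)

lemma Bset_sub: "k < sb b \<Longrightarrow> Bset (blk k) \<subseteq> {..<sb b}"
proof -
  assume "k < sb b"
  then have "Suc (blk k) \<le> b" using blk_less by (simp add: Suc_leI)
  then have "sb (Suc (blk k)) \<le> sb b" by (rule sb_le)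
  then show ?thesis unfolding Bset_def by auto
qed

lemma uu_zero_outside: "i \<notin> Bset (blk k) \<Longrightarrow> uu k i = 0"
  using uu_nz blk_iff by blast

lemma uu_zero_outside': "k \<notin> Bset (blk i) \<Longrightarrow> uu k i = 0"
  using uu_nz blk_iff by metis

lemma rowR:
  assumes "i' < sb b"
  shows "(\<Sum>k<sb b. uu k i' * uu k i) = (if i' = i then 1 else 0)"
proof -
  define c where "c = blk i'"
  have sub: "Bset c \<subseteq> {..<sb b}" unfolding c_def using Bset_sub[OF assms] .
  have "(\<Sum>k<sb b. uu k i' * uu k i) = (\<Sum>k\<in>Bset c. uu k i' * uu k i)"
    by (rule sum.mono_neutral_right) (use sub uu_zero_outside' c_def in auto)
  also have "\<dots> = (if i' = i then 1 else 0)"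
  proof (cases "blk i = c")
    case True
    then show ?thesis using uu_row[of i' c i] c_def by simp
  next
    case False
    then have "\<And>k. k \<in> Bset c \<Longrightarrow> uu k i = 0" by (metis blk_iff uu_nz)
    moreover have "i' \<noteq> i" using False c_def by auto
    ultimately show ?thesis by simp
  qed
  finally show ?thesis .
qed

lemma E1: "lpsum uu (cf x) (sb b) i = (if i < sb b then x i else 0)"
proof -
  have inner: "cf x k = (\<Sum>i'<sb b. x i' * uu k i')" if "k < sb b" for k
  proof -
    have "Bset (blk k) \<subseteq> {..<sb b}" using Bset_sub that by simp
    then show ?thesis unfolding cf_def
      by (intro sum.mono_neutral_left) (auto simp: uu_zero_outside)
  qed
  have "lpsum uu (cf x) (sb b) i = (\<Sum>k<sb b. (\<Sum>i'<sb b. x i' * uu k i') * uu k i)"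
    unfolding lpsum_def by (intro sum.cong refl) (simp add: inner)
  also have "\<dots> = (\<Sum>k<sb b. \<Sum>i'<sb b. x i' * (uu k i' * uu k i))"
    by (simp only: sum_distrib_right mult.assoc)
  also have "\<dots> = (\<Sum>i'<sb b. \<Sum>k<sb b. x i' * (uu k i' * uu k i))"
    by (rule sum.swap)
  also have "\<dots> = (\<Sum>i'<sb b. x i' * (\<Sum>k<sb b. uu k i' * uu k i))"
    by (simp only: sum_distrib_left)
  also have "\<dots> = (\<Sum>i'<sb b. (if i' = i then x i' else 0))"
    by (intro sum.cong refl) (simp add: rowR)
  also have "\<dots> = (if i < sb b then x i else 0)" by (simp add: sum.delta)
  finally show ?thesis .
qed

lemma split_lpsum: "m \<le> n \<Longrightarrow> lpsum v a n i = lpsum v a m i + (\<Sum>k\<in>{m..<n}. a k * v k i)"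
  unfolding lpsum_def by (metis sum.atLeastLessThan_concat zero_le lessThan_atLeast0)

lemma block_recon: "i \<in> Bset b \<Longrightarrow> (\<Sum>k\<in>Bset b. cf x k * uu k i) = x i"
proof -
  assume i: "i \<in> Bset b"
  have "sb b \<le> sb (Suc b)" by (rule sb_le) simp
  then have "lpsum uu (cf x) (sb (Suc b)) i = lpsum uu (cf x) (sb b) i + (\<Sum>k\<in>Bset b. cf x k * uu k i)"
    unfolding Bset_def by (rule split_lpsum)
  then show ?thesis using i E1[of x b i] E1[of x "Suc b" i] by (simp add: Bset_def)
qed

lemma parseval_block: "(\<Sum>k\<in>Bset b. (cf x k)^2) = (\<Sum>i\<in>Bset b. (x i)^2)"
proof -
  have "(\<Sum>k\<in>Bset b. (cf x k)^2) = (\<Sum>k\<in>Bset b. cf x k * (\<Sum>i\<in>Bset b. x i * uu k i))"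
    by (intro sum.cong refl) (simp add: power2_eq_square cf_def blk_iff[symmetric])
  also have "\<dots> = (\<Sum>k\<in>Bset b. \<Sum>i\<in>Bset b. x i * (cf x k * uu k i))"
    by (simp only: sum_distrib_left mult.left_commute)
  also have "\<dots> = (\<Sum>i\<in>Bset b. \<Sum>k\<in>Bset b. x i * (cf x k * uu k i))"
    by (rule sum.swap)
  also have "\<dots> = (\<Sum>i\<in>Bset b. x i * (\<Sum>k\<in>Bset b. cf x k * uu k i))"
    by (simp only: sum_distrib_left)
  also have "\<dots> = (\<Sum>i\<in>Bset b. (x i)^2)"
    by (intro sum.cong refl) (simp add: block_recon power2_eq_square)
  finally show ?thesis .
qed

lemma lpsum_supp: "i \<ge> sb (Suc (blk n)) \<Longrightarrow> lpsum uu a n i = 0"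
proof -
  assume a: "i \<ge> sb (Suc (blk n))"
  have "uu k i = 0" if "k < n" for k
  proof (rule ccontr)
    assume "uu k i \<noteq> 0"
    then have "i < sb (Suc (blk k))" by (rule uu_supp)
    moreover have "sb (Suc (blk k)) \<le> sb (Suc (blk n))" using that blk_mono by (intro sb_le) simp
    ultimately show False using a by simp
  qed
  then show ?thesis by (simp add: lpsum_def)
qed

lemma lpsum_sq_summable: "summable (\<lambda>i. (lpsum uu a n i)^2)"
  by (rule summable_finite[of "{..<sb (Suc (blk n))}"]) (auto simp: lpsum_supp)

lemma uu_l2: "uu k \<in> l2"
  unfolding l2_def by (auto intro!: summable_finite[of "{..<sb (Suc (blk k))}"] dest: uu_supp)

lemma sq_diff_le: "((p::real) - q)^2 \<le> 2 * p^2 + 2 * q^2"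
proof -
  have "2 * p^2 + 2 * q^2 - (p - q)^2 = (p + q)^2" by (simp add: power2_eq_square algebra_simps)
  then show ?thesis using zero_le_power2[of "p + q"] by linarith
qed

lemma summable_sq_diff:
  assumes "summable (\<lambda>i. (f i)^2)" "summable (\<lambda>i. (g i :: real)^2)"
  shows "summable (\<lambda>i. (f i - g i)^2)"
proof (rule summable_comparison_test[where g="\<lambda>i. 2 * (f i)^2 + 2 * (g i)^2"])
  show "\<exists>N. \<forall>n\<ge>N. norm ((f n - g n)^2) \<le> 2 * (f n)^2 + 2 * (g n)^2" using sq_diff_le by auto
  show "summable (\<lambda>i. 2 * (f i)^2 + 2 * (g i)^2)" using assms by (intro summable_add summable_mult)
qed

definition tail :: "(nat \<Rightarrow> real) \<Rightarrow> nat \<Rightarrow> real" where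
  "tail x m = (\<Sum>i. (x (i + m))^2)"

lemma tail_lim: assumes "summable (\<lambda>i. (x i)^2)" shows "tail x \<longlonglongrightarrow> 0"
proof -
  have h: "tail x m = (\<Sum>i. (x i)^2) - (\<Sum>i<m. (x i)^2)" for m
    unfolding tail_def using suminf_split_initial_segment[OF assms, of m] by simp
  have "tail x = (\<lambda>m. (\<Sum>i. (x i)^2) - (\<Sum>i<m. (x i)^2))" using h by (intro ext) simp
  moreover have "(\<lambda>m. (\<Sum>i. (x i)^2) - (\<Sum>i<m. (x i)^2)) \<longlonglongrightarrow> (\<Sum>i. (x i)^2) - (\<Sum>i. (x i)^2)"
    by (intro tendsto_diff tendsto_const summable_LIMSEQ assms)
  ultimately show ?thesis by simp
qed

lemma D_bound:
  assumes x: "x \<in> l2"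
  shows "(\<Sum>i. (lpsum uu (cf x) n i - x i)^2) \<le> 4 * tail x (sb (blk n))"
proof -
  define b where "b = blk n"
  define a where "a = cf x"
  define a' where "a' k = (if sb b \<le> k then a k else 0)" for k
  define P where "P = lpsum uu a' n"
  define y where "y i = (if sb b \<le> i then x i else 0)" for i
  have xs: "summable (\<lambda>i. (x i)^2)" using x by (simp add: l2_def)
  have nb: "sb b \<le> n" unfolding b_def by (rule blk_lb)
  have D: "lpsum uu a n i - x i = P i - y i" for i
  proof -
    have "lpsum uu a n i = lpsum uu a (sb b) i + (\<Sum>k\<in>{sb b..<n}. a k * uu k i)" using nb by (rule split_lpsum)
    moreover have "P i = (\<Sum>k\<in>{sb b..<n}. a k * uu k i)"
    proof -
      have "P i = (\<Sum>k<n. a' k * uu k i)" by (simp add: P_def lpsum_def)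
      also have "\<dots> = (\<Sum>k\<in>{sb b..<n}. a' k * uu k i)"
        by (rule sum.mono_neutral_right) (auto simp: a'_def)
      also have "\<dots> = (\<Sum>k\<in>{sb b..<n}. a k * uu k i)" by (intro sum.cong) (auto simp: a'_def)
      finally show ?thesis .
    qed
    ultimately show ?thesis using E1[of x b i] by (simp add: a_def y_def)
  qed
  have Ps: "summable (\<lambda>i. (P i)^2)" unfolding P_def by (rule lpsum_sq_summable)
  have ys: "summable (\<lambda>i. (y i)^2)"
    by (rule summable_comparison_test[OF _ xs]) (auto simp: y_def)
  have Ds: "summable (\<lambda>i. (P i - y i)^2)" by (rule summable_sq_diff[OF Ps ys])
  have "(\<Sum>i. (lpsum uu a n i - x i)^2) = (\<Sum>i. (P i - y i)^2)" by (simp add: D)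
  also have "\<dots> \<le> (\<Sum>i. 2 * (P i)^2 + 2 * (y i)^2)"
    by (rule suminf_le[OF _ Ds]) (use sq_diff_le Ps ys in \<open>auto intro!: summable_add summable_mult\<close>)
  also have "\<dots> = 2 * (\<Sum>i. (P i)^2) + 2 * (\<Sum>i. (y i)^2)"
    using Ps ys by (simp add: suminf_add[symmetric] suminf_mult summable_mult)
  also have "(\<Sum>i. (P i)^2) \<le> (\<Sum>i. (y i)^2)"
  proof -
    have "(\<Sum>i. (P i)^2) = (\<Sum>k<n. (a' k)^2)" unfolding P_def by (rule iso_gen(1)[OF uu_supp uu_orth])
    also have "\<dots> = (\<Sum>k\<in>{sb b..<n}. (a k)^2)"
      by (rule trans[OF sum.mono_neutral_right[of "{..<n}" "{sb b..<n}"]]) (auto simp: a'_def)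
    also have "\<dots> \<le> (\<Sum>k\<in>Bset b. (a k)^2)"
    proof (rule sum_mono2)
      show "{sb b..<n} \<subseteq> Bset b" unfolding Bset_def b_def using blk_ub[of n] by auto
    qed auto
    also have "\<dots> = (\<Sum>i\<in>Bset b. (x i)^2)" unfolding a_def by (rule parseval_block)
    also have "\<dots> = (\<Sum>i\<in>Bset b. (y i)^2)" by (intro sum.cong) (auto simp: y_def Bset_def)
    also have "\<dots> \<le> (\<Sum>i. (y i)^2)" by (rule sum_le_suminf[OF ys]) auto
    finally show ?thesis .
  qed
  also have "(\<Sum>i. (y i)^2) = tail x (sb b)"
  proof -
    have "(\<Sum>i. (y i)^2) = (\<Sum>i. (y (i + sb b))^2) + (\<Sum>i<sb b. (y i)^2)"
      by (rule suminf_split_initial_segment[OF ys])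
    also have "\<dots> = tail x (sb b)" by (simp add: y_def tail_def)
    finally show ?thesis .
  qed
  finally show ?thesis by (simp add: a_def b_def)
qed

lemma expansion_exists:
  assumes x: "x \<in> l2"
  shows "has_expansion uu (cf x) x"
proof -
  have xs: "summable (\<lambda>i. (x i)^2)" using x by (simp add: l2_def)
  have f: "filterlim (\<lambda>n. sb (blk n)) at_top sequentially"
    unfolding filterlim_at_top
  proof
    fix Z
    show "\<forall>\<^sub>F n in sequentially. Z \<le> sb (blk n)"
      unfolding eventually_sequentially
    proof (intro exI allI impI)
      fix n assume "sb Z \<le> n"
      then have "sb Z < sb (Suc (blk n))" using blk_ub[of n] by simp
      then have "Z < Suc (blk n)" using sb_le by (meson not_le)
      then show "Z \<le> sb (blk n)" using sb_ge[of "blk n"] by simp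
    qed
  qed
  have t: "(\<lambda>n. tail x (sb (blk n))) \<longlonglongrightarrow> 0"
    using filterlim_compose[OF tail_lim[OF xs] f] by (simp add: o_def)
  have t2: "(\<lambda>n. 2 * sqrt (tail x (sb (blk n)))) \<longlonglongrightarrow> 0"
    using tendsto_mult[OF tendsto_const tendsto_real_sqrt[OF t], of 2] by simp
  show ?thesis unfolding has_expansion_def
  proof (rule tendsto_sandwich[OF _ _ tendsto_const t2])
    show "\<forall>\<^sub>F n in sequentially. 0 \<le> l2norm (\<lambda>i. lpsum uu (cf x) n i - x i)"
      unfolding l2norm_def
      by (intro always_eventually allI real_sqrt_ge_zero suminf_nonneg summable_sq_diff[OF lpsum_sq_summable xs]) simp
    show "\<forall>\<^sub>F n in sequentially. l2norm (\<lambda>i. lpsum uu (cf x) n i - x i) \<le> 2 * sqrt (tail x (sb (blk n)))"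
    proof (intro always_eventually allI)
      fix n
      have "l2norm (\<lambda>i. lpsum uu (cf x) n i - x i) \<le> sqrt (4 * tail x (sb (blk n)))"
        unfolding l2norm_def using D_bound[OF x, of n] by simp
      also have "\<dots> = 2 * sqrt (tail x (sb (blk n)))" by (simp add: real_sqrt_mult)
      finally show "l2norm (\<lambda>i. lpsum uu (cf x) n i - x i) \<le> 2 * sqrt (tail x (sb (blk n)))" .
    qed
  qed
qed

lemma uu_colB: "(\<Sum>i\<in>Bset (blk k). uu l i * uu k i) = (if l = k then 1 else 0)"
proof (cases "blk l = blk k")
  case True
  then show ?thesis using uu_col[of l "blk k" k] by simp
next
  case False
  then have "\<And>i. i \<in> Bset (blk k) \<Longrightarrow> uu l i = 0" by (metis blk_iff uu_nz)
  then show ?thesis using False by auto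
qed

lemma expansion_unique:
  assumes x: "x \<in> l2" and h: "has_expansion uu a x"
  shows "a = cf x"
proof
  fix k
  have xs: "summable (\<lambda>i. (x i)^2)" using x by (simp add: l2_def)
  define D where "D = (\<lambda>n i. lpsum uu a n i - x i)"
  have Ds: "summable (\<lambda>i. (D n i)^2)" for n unfolding D_def by (rule summable_sq_diff[OF lpsum_sq_summable xs])
  have lim: "(\<lambda>n. (l2norm (D n))^2) \<longlonglongrightarrow> 0"
    using tendsto_power[OF h[unfolded has_expansion_def], of 2] by (simp add: D_def)
  have bnd: "(a k - cf x k)^2 \<le> (l2norm (D n))^2" if "k < n" for n
  proof -
    have "(\<Sum>i\<in>Bset (blk k). lpsum uu a n i * uu k i) = a k"
    proof -
      have "(\<Sum>i\<in>Bset (blk k). lpsum uu a n i * uu k i) = (\<Sum>l<n. a l * (\<Sum>i\<in>Bset (blk k). uu l i * uu k i))"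
      proof -
        have "(\<Sum>i\<in>Bset (blk k). lpsum uu a n i * uu k i) = (\<Sum>i\<in>Bset (blk k). \<Sum>l<n. a l * (uu l i * uu k i))"
          unfolding lpsum_def by (simp only: sum_distrib_right mult.assoc)
        also have "\<dots> = (\<Sum>l<n. \<Sum>i\<in>Bset (blk k). a l * (uu l i * uu k i))" by (rule sum.swap)
        also have "\<dots> = (\<Sum>l<n. a l * (\<Sum>i\<in>Bset (blk k). uu l i * uu k i))" by (simp only: sum_distrib_left)
        finally show ?thesis .
      qed
      also have "\<dots> = a k" using that by (simp add: uu_colB if_distrib sum.delta cong: if_cong)
      finally show ?thesis .
    qed
    then have "(\<Sum>i\<in>Bset (blk k). D n i * uu k i) = a k - cf x k"
      by (simp add: D_def cf_def algebra_simps sum_subtractf)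
    then have "(a k - cf x k)^2 \<le> (\<Sum>i\<in>Bset (blk k). (D n i)^2) * (\<Sum>i\<in>Bset (blk k). (uu k i)^2)"
      using Cauchy_Schwarz_ineq_sum[of "D n" "uu k" "Bset (blk k)"] by simp
    also have "(\<Sum>i\<in>Bset (blk k). (uu k i)^2) = 1" using uu_colB[of k k] by (simp add: power2_eq_square)
    also have "(\<Sum>i\<in>Bset (blk k). (D n i)^2) \<le> (\<Sum>i. (D n i)^2)" by (rule sum_le_suminf[OF Ds]) auto
    also have "\<dots> = (l2norm (D n))^2" unfolding l2norm_def
      by (simp add: suminf_nonneg[OF Ds])
    finally show ?thesis by simp
  qed
  have "(a k - cf x k)^2 \<le> 0"
    by (rule LIMSEQ_le_const[OF lim]) (use bnd in \<open>auto intro!: exI[of _ "Suc k"]\<close>)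
  then show "a k = cf x k" by simp
qed

lemma basis_uu: "is_basis_l2 uu"
  unfolding is_basis_l2_def
  using uu_l2 expansion_exists expansion_unique by blast

lemma coef_uu: "x \<in> l2 \<Longrightarrow> has_expansion uu a x \<Longrightarrow> coef uu x = a"
  unfolding coef_def using expansion_unique expansion_exists
  by (metis (mono_tags, lifting) the_equality)




definition aw :: "nat \<Rightarrow> nat \<Rightarrow> real" where
  "aw b k = (if sb b \<le> k \<and> k < sb b + (2 * Suc b + 1) then 1 / sqrt (real (2 * Suc b + 1)) else 0)"

lemma blk_in: "sb b \<le> k \<Longrightarrow> k < sb b + (2 * Suc b + 2) \<Longrightarrow> blk k = b"
  by (rule blk_eq) (auto simp: sb_Suc)

lemma aw_nz: "aw b k \<noteq> 0 \<Longrightarrow> blk k = b"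
  unfolding aw_def by (intro blk_in) (auto split: if_splits)

lemma W2: "blk i \<noteq> b \<Longrightarrow> lpsum uu (aw b) n i = 0"
proof -
  assume a: "blk i \<noteq> b"
  have "aw b k * uu k i = 0" for k
  proof (rule ccontr)
    assume "aw b k * uu k i \<noteq> 0"
    then have "blk k = b" "blk i = blk k" using aw_nz uu_nz by auto
    then show False using a by simp
  qed
  then show ?thesis unfolding lpsum_def by (simp only: sum.neutral_const)
qed

lemma W1:
  assumes j: "j < 2 * Suc b + 1"
  shows "lpsum uu (aw b) (sb b + j + 1) (sb b + j) = PP (Suc b) j / sqrt (real (2 * Suc b + 1))"
proof -
  define N where "N = 2 * Suc b + 1"
  have "lpsum uu (aw b) (sb b + j + 1) (sb b + j) = (\<Sum>k\<in>{sb b..<sb b + j + 1}. aw b k * uu k (sb b + j))"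
    unfolding lpsum_def by (rule sum.mono_neutral_right) (auto simp: aw_def)
  also have "\<dots> = (\<Sum>r\<in>{0..<j + 1}. aw b (r + sb b) * uu (r + sb b) (sb b + j))"
    using sum.shift_bounds_nat_ivl[of "\<lambda>k. aw b k * uu k (sb b + j)" 0 "sb b" "j + 1"] by (simp add: add.commute)
  also have "\<dots> = (\<Sum>r<Suc j. hh (Suc b) (real j - real r) / sqrt (real N))"
  proof (rule sum.cong)
    fix r assume r: "r \<in> {..<Suc j}"
    have b1: "blk (r + sb b) = b" using r j by (intro blk_in) auto
    have b2: "blk (sb b + j) = b" using j by (intro blk_in) auto
    have "aw b (r + sb b) = 1 / sqrt (real N)" using r j by (simp add: aw_def N_def)
    moreover have "uu (r + sb b) (sb b + j) = hh (Suc b) (real j - real r)"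
      using b1 b2 r j by (simp add: uu_def GG_def GGs_def)
    ultimately show "aw b (r + sb b) * uu (r + sb b) (sb b + j) = hh (Suc b) (real j - real r) / sqrt (real N)" by simp
  qed (auto simp: atLeast0LessThan)
  also have "\<dots> = PP (Suc b) j / sqrt (real N)" by (simp only: PP_def sum_divide_distrib)
  finally show ?thesis by (simp add: N_def)
qed

lemma maxfun_lower:
  fixes F :: "nat \<Rightarrow> nat \<Rightarrow> real" and S :: "nat set"
  assumes S: "finite S" "S \<noteq> {}"
    and Fz: "\<And>n i. n \<in> S \<Longrightarrow> blk i \<noteq> b \<Longrightarrow> F n i = 0"
    and Fw: "\<And>j. j < 2 * Suc b + 1 \<Longrightarrow> \<exists>n\<in>S. \<bar>F n (sb b + j)\<bar> = \<bar>PP (Suc b) j / sqrt (real (2 * Suc b + 1))\<bar>"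
    and h: "harm (Suc b) / pi - 1/2 \<ge> 0"
  shows "harm (Suc b) / pi - 1/2 \<le> l2norm (\<lambda>i. Max ((\<lambda>n. \<bar>F n i\<bar>) ` S))"
proof -
  define f where "f i = Max ((\<lambda>n. \<bar>F n i\<bar>) ` S)" for i
  have fge: "\<bar>F n i\<bar> \<le> f i" if "n \<in> S" for n i unfolding f_def using S that by (intro Max_ge) auto
  have f0: "f i = 0" if "i \<notin> Bset b" for i
  proof -
    have "blk i \<noteq> b" using that blk_iff by blast
    then have "(\<lambda>n. \<bar>F n i\<bar>) ` S = {0}" using Fz S(2) by auto
    then show ?thesis by (simp add: f_def)
  qed
  obtain n0 where n0: "n0 \<in> S" using S(2) by blast
  have fnn: "0 \<le> f i" for i using fge[OF n0, of i] by linarith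
  have C: "(\<Sum>i. (f i)^2) = (\<Sum>r<2 * Suc b + 2. (f (sb b + r))^2)"
  proof -
    have "(\<Sum>i. (f i)^2) = (\<Sum>i\<in>Bset b. (f i)^2)" by (rule suminf_finite) (auto simp: f0)
    also have "\<dots> = (\<Sum>r<2 * Suc b + 2. (f (sb b + r))^2)" by (rule sum_Bset)
    finally show ?thesis .
  qed
  have B: "(\<Sum>r<2 * Suc b + 1. (f (sb b + r))^2) \<le> (\<Sum>r<2 * Suc b + 2. (f (sb b + r))^2)"
    by (rule sum_mono2) auto
  have A: "(\<Sum>j<2 * Suc b + 1. (PP (Suc b) j / sqrt (real (2 * Suc b + 1)))^2) \<le> (\<Sum>r<2 * Suc b + 1. (f (sb b + r))^2)"
  proof (rule sum_mono)
    fix j assume "j \<in> {..<2 * Suc b + 1}"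
    then obtain n where n: "n \<in> S" "\<bar>F n (sb b + j)\<bar> = \<bar>PP (Suc b) j / sqrt (real (2 * Suc b + 1))\<bar>" using Fw by auto
    have "\<bar>F n (sb b + j)\<bar> \<le> f (sb b + j)" using n(1) by (rule fge)
    then have "\<bar>PP (Suc b) j / sqrt (real (2 * Suc b + 1))\<bar> \<le> \<bar>f (sb b + j)\<bar>"
      using n(2) abs_of_nonneg[OF fnn[of "sb b + j"]] by linarith
    then show "(PP (Suc b) j / sqrt (real (2 * Suc b + 1)))^2 \<le> (f (sb b + j))^2" using abs_le_square_iff by blast
  qed
  have "(harm (Suc b) / pi - 1/2)^2 \<le> (\<Sum>j<2 * Suc b + 1. (PP (Suc b) j / sqrt (real (2 * Suc b + 1)))^2)"
    by (rule PP_sq_lower[OF h])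
  also note A also note B also note C[symmetric]
  finally have "(harm (Suc b) / pi - 1/2)^2 \<le> (\<Sum>i. (f i)^2)" .
  then have "sqrt ((harm (Suc b) / pi - 1/2)^2) \<le> sqrt (\<Sum>i. (f i)^2)" by (rule real_sqrt_le_mono)
  then show ?thesis using h by (simp add: l2norm_def f_def[abs_def])
qed

lemma W3: "l2norm (lpsum uu (aw b) (sb b + (2 * Suc b + 1))) = 1"
proof -
  define N where "N = 2 * Suc b + 1"
  have "(\<Sum>k<sb b + N. (aw b k)^2) = (\<Sum>k\<in>{sb b..<sb b + N}. (aw b k)^2)"
    by (rule sum.mono_neutral_right) (auto simp: aw_def N_def)
  also have "\<dots> = (\<Sum>k\<in>{sb b..<sb b + N}. 1 / real N)"
    by (intro sum.cong) (auto simp: aw_def N_def power_divide)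
  also have "\<dots> = 1" by (simp add: N_def)
  finally show ?thesis unfolding iso_uu N_def by simp
qed

lemma harm_big: "\<exists>b. harm (Suc b) / pi - 1/2 > C \<and> harm (Suc b) / pi - 1/2 \<ge> 0"
proof -
  have "\<forall>\<^sub>F n in sequentially. pi * (\<bar>C\<bar> + 1) \<le> (harm n :: real)"
    using harm_at_top unfolding filterlim_at_top by blast
  then obtain n0 where n0: "\<And>n. n \<ge> n0 \<Longrightarrow> pi * (\<bar>C\<bar> + 1) \<le> (harm n :: real)"
    unfolding eventually_sequentially by blast
  have "pi * (\<bar>C\<bar> + 1) \<le> (harm (Suc n0) :: real)" by (rule n0) simp
  then have "\<bar>C\<bar> + 1 \<le> harm (Suc n0) / pi" by (simp add: field_simps)
  moreover have "C \<le> \<bar>C\<bar>" by simp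
  moreover have "0 \<le> \<bar>C\<bar>" by simp
  ultimately have "harm (Suc n0) / pi - 1/2 > C" "harm (Suc n0) / pi - 1/2 \<ge> 0" by linarith+
  then show ?thesis by blast
qed

lemma not_bibasic: "\<not> bibasic uu"
proof
  assume "bibasic uu"
  then obtain M0 where M0: "M0 \<ge> 1" "\<And>m a. m \<ge> 1 \<Longrightarrow>
      l2norm (\<lambda>i. Max ((\<lambda>n. \<bar>lpsum uu a n i\<bar>) ` {1..m})) \<le> M0 * l2norm (lpsum uu a m)"
    unfolding bibasic_def by blast
  obtain b where b: "harm (Suc b) / pi - 1/2 > M0" "harm (Suc b) / pi - 1/2 \<ge> 0" using harm_big by blast
  define m where "m = sb b + (2 * Suc b + 1)"
  have "harm (Suc b) / pi - 1/2 \<le> l2norm (\<lambda>i. Max ((\<lambda>n. \<bar>lpsum uu (aw b) n i\<bar>) ` {1..m}))"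
  proof (rule maxfun_lower[OF _ _ _ _ b(2)])
    show "\<And>n i. n \<in> {1..m} \<Longrightarrow> blk i \<noteq> b \<Longrightarrow> lpsum uu (aw b) n i = 0" by (rule W2)
    fix j assume "j < 2 * Suc b + 1"
    then show "\<exists>n\<in>{1..m}. \<bar>lpsum uu (aw b) n (sb b + j)\<bar> = \<bar>PP (Suc b) j / sqrt (real (2 * Suc b + 1))\<bar>"
      using W1 by (intro bexI[of _ "sb b + j + 1"]) (auto simp: m_def)
  qed (auto simp: m_def)
  also have "\<dots> \<le> M0 * l2norm (lpsum uu (aw b) m)" by (rule M0(2)) (simp add: m_def)
  also have "\<dots> = M0" using W3 by (simp add: m_def)
  finally show False using b by simp
qed


lemma aw_zero_beyond: "k \<ge> sb b + (2 * Suc b + 1) \<Longrightarrow> aw b k = 0" by (simp add: aw_def)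

lemma lpsum_const: "n \<ge> sb b + (2 * Suc b + 1) \<Longrightarrow> lpsum uu (aw b) n = lpsum uu (aw b) (sb b + (2 * Suc b + 1))"
proof (rule ext)
  fix i assume n: "n \<ge> sb b + (2 * Suc b + 1)"
  have "lpsum uu (aw b) n i = lpsum uu (aw b) (sb b + (2 * Suc b + 1)) i + (\<Sum>k\<in>{sb b + (2 * Suc b + 1)..<n}. aw b k * uu k i)"
    using n by (rule split_lpsum)
  also have "(\<Sum>k\<in>{sb b + (2 * Suc b + 1)..<n}. aw b k * uu k i) = 0" by (intro sum.neutral) (auto simp: aw_def)
  finally show "lpsum uu (aw b) n i = lpsum uu (aw b) (sb b + (2 * Suc b + 1)) i" by simp
qed

lemma greedy_eq:
  fixes b :: nat
  defines "x \<equiv> lpsum uu (aw b) (sb b + (2 * Suc b + 1))"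
  assumes n: "n \<le> 2 * Suc b + 1"
  shows "greedy_sum uu x n = lpsum uu (aw b) (sb b + n)"
proof -
  define N where "N = 2 * Suc b + 1"
  define c where "c = 1 / sqrt (real N)"
  have c0: "c > 0" by (simp add: c_def N_def)
  have xl2: "x \<in> l2" unfolding x_def l2_def by (simp add: lpsum_sq_summable)
  have exp: "has_expansion uu (aw b) x"
    unfolding has_expansion_def
  proof (rule tendsto_eventually)
    show "\<forall>\<^sub>F n in sequentially. l2norm (\<lambda>i. lpsum uu (aw b) n i - x i) = 0"
      unfolding eventually_sequentially
    proof (intro exI[of _ "sb b + (2 * Suc b + 1)"] allI impI)
      fix n :: nat assume "n \<ge> sb b + (2 * Suc b + 1)"
      then have e: "lpsum uu (aw b) n = x" unfolding x_def by (rule lpsum_const)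
      show "l2norm (\<lambda>i. lpsum uu (aw b) n i - x i) = 0" by (simp add: e l2norm_def)
    qed
  qed
  have co: "coef uu x = aw b" by (rule coef_uu[OF xl2 exp])
  have awv: "aw b k = (if sb b \<le> k \<and> k < sb b + N then c else 0)" for k by (simp add: aw_def c_def N_def)
  have absco: "\<bar>coef uu x j\<bar> = (if sb b \<le> j \<and> j < sb b + N then c else 0)" for j
    using c0 unfolding co awv by simp
  have rank: "greedy_rank uu x k = k - sb b" if k: "sb b \<le> k" "k < sb b + N" for k
  proof -
    have ck: "\<bar>coef uu x k\<bar> = c" using k absco[of k] by simp
    have "{j. \<bar>coef uu x j\<bar> > \<bar>coef uu x k\<bar> \<or> (\<bar>coef uu x j\<bar> = \<bar>coef uu x k\<bar> \<and> j < k)} = {sb b..<k}"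
    proof (rule set_eqI)
      fix j
      show "j \<in> {j. \<bar>coef uu x j\<bar> > \<bar>coef uu x k\<bar> \<or> (\<bar>coef uu x j\<bar> = \<bar>coef uu x k\<bar> \<and> j < k)} \<longleftrightarrow> j \<in> {sb b..<k}"
      proof (cases "sb b \<le> j \<and> j < sb b + N")
        case True
        then show ?thesis using k by (auto simp: ck absco)
      next
        case False
        then show ?thesis using k c0 by (auto simp: ck absco)
      qed
    qed
    then show ?thesis unfolding greedy_rank_def by simp
  qed
  have set: "{k. coef uu x k \<noteq> 0 \<and> greedy_rank uu x k < n} = {sb b..<sb b + n}"
  proof (rule set_eqI)
    fix k
    show "k \<in> {k. coef uu x k \<noteq> 0 \<and> greedy_rank uu x k < n} \<longleftrightarrow> k \<in> {sb b..<sb b + n}"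
    proof (cases "sb b \<le> k \<and> k < sb b + N")
      case True
      then have "coef uu x k \<noteq> 0" using c0 unfolding co awv by simp
      then show ?thesis using rank[of k] True n unfolding N_def by auto
    next
      case False
      then have "coef uu x k = 0" unfolding co awv by auto
      then show ?thesis using False n unfolding N_def by auto
    qed
  qed
  show ?thesis
  proof (rule ext)
    fix i
    have "greedy_sum uu x n i = (\<Sum>k\<in>{sb b..<sb b + n}. aw b k * uu k i)"
      unfolding greedy_sum_def set by (simp only: co)
    also have "\<dots> = lpsum uu (aw b) (sb b + n) i"
    proof -
      have "lpsum uu (aw b) (sb b + n) i = lpsum uu (aw b) (sb b) i + (\<Sum>k\<in>{sb b..<sb b + n}. aw b k * uu k i)"
        by (rule split_lpsum) simp
      moreover have "lpsum uu (aw b) (sb b) i = 0" by (simp add: lpsum_def aw_def)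
      ultimately show ?thesis by simp
    qed
    finally show "greedy_sum uu x n i = lpsum uu (aw b) (sb b + n) i" .
  qed
qed

lemma not_uqg: "\<not> uniformly_quasi_greedy uu"
proof
  assume "uniformly_quasi_greedy uu"
  then obtain C where C: "\<And>m x. m \<ge> 1 \<Longrightarrow> x \<in> span_E uu \<Longrightarrow> l2norm x = 1 \<Longrightarrow>
      l2norm (\<lambda>i. Max ((\<lambda>n. \<bar>greedy_sum uu x n i\<bar>) ` {1..m})) \<le> C"
    unfolding uniformly_quasi_greedy_def by blast
  obtain b where b: "harm (Suc b) / pi - 1/2 > C" "harm (Suc b) / pi - 1/2 \<ge> 0" using harm_big by blast
  define N where "N = 2 * Suc b + 1"
  define x where "x = lpsum uu (aw b) (sb b + N)"
  have xl2: "x \<in> l2" unfolding x_def l2_def by (simp add: lpsum_sq_summable)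
  have exp: "has_expansion uu (aw b) x"
    unfolding has_expansion_def
  proof (rule tendsto_eventually)
    show "\<forall>\<^sub>F n in sequentially. l2norm (\<lambda>i. lpsum uu (aw b) n i - x i) = 0"
      unfolding eventually_sequentially
    proof (intro exI[of _ "sb b + (2 * Suc b + 1)"] allI impI)
      fix n :: nat assume "n \<ge> sb b + (2 * Suc b + 1)"
      then have e: "lpsum uu (aw b) n = x" unfolding x_def N_def by (rule lpsum_const)
      show "l2norm (\<lambda>i. lpsum uu (aw b) n i - x i) = 0" by (simp add: e l2norm_def)
    qed
  qed
  have xE: "x \<in> span_E uu" unfolding span_E_def using xl2 exp by blast
  have xn: "l2norm x = 1" unfolding x_def N_def by (rule W3)
  have ge: "greedy_sum uu x n = lpsum uu (aw b) (sb b + n)" if "n \<le> N" for n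
    unfolding x_def N_def using greedy_eq[of n b] that by (simp add: N_def)
  have "harm (Suc b) / pi - 1/2 \<le> l2norm (\<lambda>i. Max ((\<lambda>n. \<bar>greedy_sum uu x n i\<bar>) ` {1..N}))"
  proof (rule maxfun_lower[OF _ _ _ _ b(2)])
    show "\<And>n i. n \<in> {1..N} \<Longrightarrow> blk i \<noteq> b \<Longrightarrow> greedy_sum uu x n i = 0" using ge W2 by simp
    fix j assume j: "j < 2 * Suc b + 1"
    then have "greedy_sum uu x (j + 1) (sb b + j) = PP (Suc b) j / sqrt (real (2 * Suc b + 1))"
      using ge[of "j + 1"] W1[OF j] by (simp add: N_def add.assoc)
    then show "\<exists>n\<in>{1..N}. \<bar>greedy_sum uu x n (sb b + j)\<bar> = \<bar>PP (Suc b) j / sqrt (real (2 * Suc b + 1))\<bar>"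
      using j by (intro bexI[of _ "j + 1"]) (auto simp: N_def)
  qed (auto simp: N_def)
  also have "\<dots> \<le> C" by (rule C[OF _ xE xn]) (simp add: N_def)
  finally show False using b by simp
qed

theorem proposition4p3:
  shows "\<exists>u :: nat \<Rightarrow> nat \<Rightarrow> real.
           is_basis_l2 u \<and> isometrically_equivalent u canon \<and>
           (\<forall>j k. l2inner (u j) (u k) = (if j = k then 1 else 0)) \<and>
           \<not> bibasic u \<and> \<not> uniformly_quasi_greedy u"
  using basis_uu isoeq uu_orth not_bibasic not_uqg by blast



end
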